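(* Let $\mathcal{A}$ be a strong $T_0$-family and let $\|x\|_{2,\mathcal{A}}=\|x\|_2+\|x\|_\mathcal{A}$ for $x\in\ell_2(\omega_1)$. Then the space $(\ell_2(\omega_1),\|\cdot\|_{2,\mathcal{A}})$ does not contain any uncountable equilateral set.
   Context: $\|\cdot\|_2$ is the Hilbert norm of $\ell_2(\omega_1)$ and $\|x\|_\mathcal{A}=\sup_{A\in\mathcal{A}}\sqrt{\sum_{\alpha\in A}x(\alpha)^2}$; $\|\cdot\|_{2,\mathcal{A}}$ is an equivalent norm on $\ell_2(\omega_1)$. A set $\mathcal{Y}$ is equilateral if there is $\delta>0$ with $\|y-y'\|=\delta$ for all distinct $y,y'\in\mathcal{Y}$. For disjoint $A,B$, $A\otimes B=\{\{\alpha,\beta\}:\alpha\in A,\beta\in B\}$. A function $c=(c_0,c_1):[\omega_1]^2\to I\times J$ ($0,1\in I$, $J\ne\emptyset$) is a $T$-coloring if for every uncountable pairwise disjoint family $\{\{a_\xi(0),a_\xi(1)\}:\xi<\omega_1\}$ of pairs and all $(i_0,j_0),(i_1,j_1)\in I\times J$ there are $\xi<\eta$ with $c(\{a_\xi(0),a_\eta(0)\})=(i_0,j_0)$, $c(\{a_\xi(1),a_\eta(1)\})=(i_1,j_1)$; it is a strong $T$-coloring if moreover for every uncountable pairwise disjoint family $\{A_\xi:\xi<\omega_1\}$ of finite subsets of $\omega_1$ there are $\xi<\eta$ with $c_0[A_\xi\otimes A_\eta]=\{0\}$ and $\xi<\eta$ with $c_0[A_\xi\otimes A_\eta]=\{1\}$.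 A strong $T_0$-family is $\mathcal{A}_c=\{a\subseteq\omega_1\text{ finite}:c_0[[a]^2]\subseteq\{0\}\}$ for a strong $T$-coloring $c$. *)

theory Defs
  imports "HOL-Analysis.Analysis"
begin

text \<open>The index type 'a plays the role of omega_1: an uncountable well-order all of
whose proper initial segments are countable.\<close>
definition omega1_like :: "'a::wellorder itself \<Rightarrow> bool" where
  "omega1_like _ \<longleftrightarrow> \<not> countable (UNIV :: 'a set) \<and> (\<forall>\<alpha>::'a. countable {\<beta>. \<beta> < \<alpha>})"

definition pairs2 :: "'a set \<Rightarrow> 'a set set" where
  "pairs2 S = {p. p \<subseteq> S \<and> card p = 2}"

definition otimes :: "'a set \<Rightarrow> 'a set \<Rightarrow> 'a set set" where
  "otimes A B = {{\<alpha>, \<beta>} | \<alpha> \<beta>. \<alpha> \<in> A \<and> \<beta> \<in> B}"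

definition T_coloring ::
  "('a::wellorder set \<Rightarrow> 'i::zero_neq_one \<times> 'j) \<Rightarrow> 'i set \<Rightarrow> 'j set \<Rightarrow> bool" where
  "T_coloring c I J \<longleftrightarrow>
     0 \<in> I \<and> 1 \<in> I \<and> J \<noteq> {} \<and>
     (\<forall>p \<in> pairs2 (UNIV :: 'a set). c p \<in> I \<times> J) \<and>
     (\<forall>a0 a1 :: 'a \<Rightarrow> 'a.
        (\<forall>\<xi>. a0 \<xi> \<noteq> a1 \<xi>) \<and>
        (\<forall>\<xi> \<eta>. \<xi> \<noteq> \<eta> \<longrightarrow> {a0 \<xi>, a1 \<xi>} \<inter> {a0 \<eta>, a1 \<eta>} = {}) \<longrightarrow>
        (\<forall>i0 \<in> I. \<forall>j0 \<in> J. \<forall>i1 \<in> I. \<forall>j1 \<in> J.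
           \<exists>\<xi> \<eta>. \<xi> < \<eta> \<and> c {a0 \<xi>, a0 \<eta>} = (i0, j0) \<and> c {a1 \<xi>, a1 \<eta>} = (i1, j1)))"

definition strong_T_coloring ::
  "('a::wellorder set \<Rightarrow> 'i::zero_neq_one \<times> 'j) \<Rightarrow> 'i set \<Rightarrow> 'j set \<Rightarrow> bool" where
  "strong_T_coloring c I J \<longleftrightarrow>
     T_coloring c I J \<and>
     (\<forall>A :: 'a \<Rightarrow> 'a set.
        (\<forall>\<xi>. finite (A \<xi>) \<and> A \<xi> \<noteq> {}) \<and>
        (\<forall>\<xi> \<eta>. \<xi> \<noteq> \<eta> \<longrightarrow> A \<xi> \<inter> A \<eta> = {}) \<longrightarrow>
        (\<exists>\<xi> \<eta>. \<xi> < \<eta> \<and> (fst \<circ> c) ` otimes (A \<xi>) (A \<eta>) = {0}) \<and>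
        (\<exists>\<xi> \<eta>. \<xi> < \<eta> \<and> (fst \<circ> c) ` otimes (A \<xi>) (A \<eta>) = {1}))"

definition T0_family :: "('a set \<Rightarrow> 'i::zero_neq_one \<times> 'j) \<Rightarrow> 'a set set" where
  "T0_family c = {a. finite a \<and> (fst \<circ> c) ` pairs2 a \<subseteq> {0}}"

definition l2 :: "('a \<Rightarrow> real) set" where
  "l2 = {x. (\<lambda>\<alpha>. (x \<alpha>)\<^sup>2) summable_on UNIV}"

definition norm2 :: "('a \<Rightarrow> real) \<Rightarrow> real" where
  "norm2 x = sqrt (infsum (\<lambda>\<alpha>. (x \<alpha>)\<^sup>2) UNIV)"

definition normA :: "'a set set \<Rightarrow> ('a \<Rightarrow> real) \<Rightarrow> real" where
  "normA \<A> x = (SUP A\<in>\<A>. sqrt (\<Sum>\<alpha>\<in>A. (x \<alpha>)\<^sup>2))"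

definition norm2A :: "'a set set \<Rightarrow> ('a \<Rightarrow> real) \<Rightarrow> real" where
  "norm2A \<A> x = norm2 x + normA \<A> x"

definition equilateral :: "(('a \<Rightarrow> real) \<Rightarrow> real) \<Rightarrow> ('a \<Rightarrow> real) set \<Rightarrow> bool" where
  "equilateral N Y \<longleftrightarrow> (\<exists>\<delta>>0. \<forall>y\<in>Y. \<forall>y'\<in>Y. y \<noteq> y' \<longrightarrow> N (y - y') = \<delta>)"

end

theory Submission
  imports Defs
begin

lemma L2_restrict:
  assumes "finite G"
  shows "L2_set (\<lambda>a. if a \<in> X then f a else 0) G = L2_set f (G \<inter> X)"
proof -
  have "(\<Sum>a\<in>G. (if a \<in> X then f a else 0)\<^sup>2) = (\<Sum>a\<in>G. if a \<in> X then (f a)\<^sup>2 else 0)"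
    by (rule sum.cong) auto
  also have "\<dots> = (\<Sum>a\<in>G \<inter> X. (f a)\<^sup>2)" using assms by (simp add: sum.inter_restrict)
  finally show ?thesis unfolding L2_set_def by simp
qed

lemma L2_subset:
  assumes "finite B" "A \<subseteq> B"
  shows "L2_set f A \<le> L2_set f B"
  unfolding L2_set_def using assms by (intro real_sqrt_le_mono sum_mono2) auto

lemma L2_uminus: "L2_set (\<lambda>a. - f a) A = L2_set f A"
  unfolding L2_set_def by simp

lemma L2_sq: "(L2_set f A)\<^sup>2 = (\<Sum>a\<in>A. (f a)\<^sup>2)"
  unfolding L2_set_def by (simp add: sum_nonneg)

lemma L2_union_sq:
  assumes "finite A" "finite B" "A \<inter> B = {}"
  shows "(L2_set f (A \<union> B))\<^sup>2 = (L2_set f A)\<^sup>2 + (L2_set f B)\<^sup>2"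
  using assms by (simp add: L2_sq sum.union_disjoint)

lemma L2_single: "L2_set f {a} = \<bar>f a\<bar>"
  unfolding L2_set_def by simp

lemma L2_tri4:
  "L2_set (\<lambda>a. f a + g a + h a + k a) G \<le> L2_set f G + L2_set g G + L2_set h G + L2_set k G"
proof -
  have "L2_set (\<lambda>a. f a + g a + h a + k a) G \<le> L2_set (\<lambda>a. f a + g a + h a) G + L2_set k G"
    using L2_set_triangle_ineq[of "\<lambda>a. f a + g a + h a" k G] by simp
  moreover have "L2_set (\<lambda>a. f a + g a + h a) G \<le> L2_set (\<lambda>a. f a + g a) G + L2_set h G"
    using L2_set_triangle_ineq[of "\<lambda>a. f a + g a" h G] by simp
  moreover have "L2_set (\<lambda>a. f a + g a) G \<le> L2_set f G + L2_set g G"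
    using L2_set_triangle_ineq[of f g G] by simp
  ultimately show ?thesis by linarith
qed

definition TP :: "('a \<Rightarrow> real) \<Rightarrow> 'a set \<Rightarrow> real \<Rightarrow> bool" where
  "TP y F e \<longleftrightarrow> (\<forall>G. finite G \<and> G \<inter> F = {} \<longrightarrow> L2_set y G \<le> e)"

lemma TP_mono: "TP y F e \<Longrightarrow> F \<subseteq> F' \<Longrightarrow> TP y F' e"
  unfolding TP_def by blast

lemma tail_exists:
  assumes "y \<in> l2" "e > 0"
  shows "\<exists>F. finite F \<and> TP y F e"
proof -
  let ?f = "\<lambda>a. (y a)\<^sup>2"
  have sm: "?f summable_on UNIV" using assms(1) unfolding l2_def by simp
  define S where "S = infsum ?f UNIV"
  have S: "S = (SUP F\<in>{F. finite F \<and> F \<subseteq> UNIV}. sum ?f F)"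
    unfolding S_def by (rule infsum_nonneg_is_SUPREMUM_real[OF sm]) auto
  have le: "sum ?f F \<le> S" if "finite F" for F
    unfolding S_def using finite_sum_le_infsum[OF sm that] by auto
  have "S - e\<^sup>2 < S" using assms by simp
  hence "S - e\<^sup>2 < (SUP F\<in>{F. finite F \<and> F \<subseteq> UNIV}. sum ?f F)" using S by simp
  then obtain F where F: "finite F" "S - e\<^sup>2 < sum ?f F"
    by (subst (asm) less_cSUP_iff) (auto intro!: bdd_aboveI2[where M=S] le)
  have "TP y F e" unfolding TP_def
  proof safe
    fix G assume G: "finite G" "G \<inter> F = {}"
    have "sum ?f (F \<union> G) \<le> S" using le F G by simp
    moreover have "sum ?f (F \<union> G) = sum ?f F + sum ?f G" by (rule sum.union_disjoint) (use F G in auto)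
    ultimately have "sum ?f G \<le> e\<^sup>2" using F by linarith
    hence "sqrt (sum ?f G) \<le> sqrt (e\<^sup>2)" by (rule real_sqrt_le_mono)
    thus "L2_set y G \<le> e" using assms unfolding L2_set_def by simp
  qed
  with F show ?thesis by blast
qed

lemma omega_rec:
  assumes om: "omega1_like TYPE('a::wellorder)"
    and ex: "\<And>C. countable C \<Longrightarrow> \<exists>x. x \<in> X \<and> P C x"
  shows "\<exists>g::'a \<Rightarrow> 'b. \<forall>\<xi>. g \<xi> \<in> X \<and> P (g ` {\<beta>. \<beta> < \<xi>}) (g \<xi>)"
proof -
  define Fn where "Fn = (\<lambda>(h::'a \<Rightarrow> 'b) (\<xi>::'a). SOME x. x \<in> X \<and> P (h ` {\<beta>. \<beta> < \<xi>}) x)"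
  define g where "g = wfrec {(x::'a, y). x < y} Fn"
  have wfl: "wf {(x::'a, y). x < y}" by (rule wf)
  have "g \<xi> \<in> X \<and> P (g ` {\<beta>. \<beta> < \<xi>}) (g \<xi>)" for \<xi>
  proof -
    have eq: "g \<xi> = Fn (cut g {(x, y). x < y} \<xi>) \<xi>"
      by (rule def_wfrec[OF g_def[THEN eq_reflection] wfl])
    have im: "(cut g {(x, y). x < y} \<xi>) ` {\<beta>. \<beta> < \<xi>} = g ` {\<beta>. \<beta> < \<xi>}"
      by (auto simp: cut_apply)
    have "countable {\<beta>::'a. \<beta> < \<xi>}" using om unfolding omega1_like_def by blast
    hence "countable (g ` {\<beta>. \<beta> < \<xi>})" by simp
    then obtain x where "x \<in> X \<and> P (g ` {\<beta>. \<beta> < \<xi>}) x" using ex by blast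
    hence "Fn (cut g {(x, y). x < y} \<xi>) \<xi> \<in> X \<and> P (g ` {\<beta>. \<beta> < \<xi>}) (Fn (cut g {(x, y). x < y} \<xi>) \<xi>)"
      unfolding Fn_def im by (rule someI)
    thus ?thesis using eq by simp
  qed
  thus ?thesis by blast
qed

lemma omega_inj:
  assumes om: "omega1_like TYPE('a::wellorder)" and X: "uncountable X"
  shows "\<exists>g::'a \<Rightarrow> 'b. inj g \<and> range g \<subseteq> X"
proof -
  have "\<exists>x. x \<in> X \<and> x \<notin> C" if "countable C" for C
    using X that by (metis countable_subset subsetI)
  then obtain g :: "'a \<Rightarrow> 'b" where g: "\<forall>\<xi>. g \<xi> \<in> X \<and> g \<xi> \<notin> g ` {\<beta>. \<beta> < \<xi>}"
    using omega_rec[OF om, of X "\<lambda>C x. x \<notin> C"] by blast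
  have "inj g"
  proof (rule injI)
    fix a b assume "g a = g b"
    show "a = b"
    proof (rule ccontr)
      assume "a \<noteq> b"
      hence "a < b \<or> b < a" by auto
      thus False using g \<open>g a = g b\<close> by (metis (mono_tags, lifting) image_eqI mem_Collect_eq)
    qed
  qed
  with g show ?thesis by blast
qed

lemma uncountable_UNIV_omega: "omega1_like TYPE('a::wellorder) \<Longrightarrow> uncountable (UNIV::'a set)"
  unfolding omega1_like_def by blast

lemma pigeon:
  assumes "uncountable U" "\<And>k. k \<in> U \<Longrightarrow> h k \<in> V" "countable V"
  shows "\<exists>v\<in>V. uncountable {k\<in>U. h k = v}"
proof (rule ccontr)
  assume "\<not> ?thesis"
  hence "countable (\<Union>v\<in>V. {k\<in>U. h k = v})" using assms(3) by blast
  moreover have "U \<subseteq> (\<Union>v\<in>V. {k\<in>U. h k = v})" using assms(2) by blast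
  ultimately show False using assms(1) countable_subset by blast
qed

lemma pigeon_type:
  assumes "uncountable U"
  shows "\<exists>v::'v::countable. uncountable {k\<in>U. h k = v}"
  using pigeon[OF assms, of h UNIV] by auto

lemma delta_n:
  assumes om: "omega1_like TYPE('a::wellorder)"
  shows "\<forall>(U::'k set) (F::'k \<Rightarrow> 'b set). uncountable U \<and> (\<forall>k\<in>U. finite (F k) \<and> card (F k) = n) \<longrightarrow>
     (\<exists>U' R. U' \<subseteq> U \<and> uncountable U' \<and> (\<forall>k\<in>U'. \<forall>k'\<in>U'. k \<noteq> k' \<longrightarrow> F k \<inter> F k' = R))"
proof (induction n)
  case 0
  show ?case
  proof (intro allI impI)
    fix U :: "'k set" and F :: "'k \<Rightarrow> 'b set"
    assume a: "uncountable U \<and> (\<forall>k\<in>U. finite (F k) \<and> card (F k) = 0)"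
    hence "\<forall>k\<in>U. F k = {}" by auto
    thus "\<exists>U' R. U' \<subseteq> U \<and> uncountable U' \<and> (\<forall>k\<in>U'. \<forall>k'\<in>U'. k \<noteq> k' \<longrightarrow> F k \<inter> F k' = R)"
      using a by (intro exI[of _ U] exI[of _ "{}"]) auto
  qed
next
  case (Suc n)
  show ?case
  proof (intro allI impI)
    fix U :: "'k set" and F :: "'k \<Rightarrow> 'b set"
    assume a: "uncountable U \<and> (\<forall>k\<in>U. finite (F k) \<and> card (F k) = Suc n)"
    show "\<exists>U' R. U' \<subseteq> U \<and> uncountable U' \<and> (\<forall>k\<in>U'. \<forall>k'\<in>U'. k \<noteq> k' \<longrightarrow> F k \<inter> F k' = R)"
    proof (cases "\<exists>p. uncountable {k\<in>U. p \<in> F k}")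
      case True
      then obtain p where p: "uncountable {k\<in>U. p \<in> F k}" by blast
      let ?U1 = "{k\<in>U. p \<in> F k}"
      have "\<forall>k\<in>?U1. finite (F k - {p}) \<and> card (F k - {p}) = n" using a by simp
      from Suc.IH[rule_format, of "{k\<in>U. p \<in> F k}" "\<lambda>k. F k - {p}", OF conjI[OF p this]]
      obtain U' R where U': "U' \<subseteq> ?U1" "uncountable U'"
        "\<forall>k\<in>U'. \<forall>k'\<in>U'. k \<noteq> k' \<longrightarrow> (F k - {p}) \<inter> (F k' - {p}) = R"
        by blast
      have "\<forall>k\<in>U'. \<forall>k'\<in>U'. k \<noteq> k' \<longrightarrow> F k \<inter> F k' = insert p R"
      proof (intro ballI impI)
        fix k k' assume k: "k \<in> U'" "k' \<in> U'" "k \<noteq> k'"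
        hence "p \<in> F k" "p \<in> F k'" using U'(1) by auto
        moreover have "(F k - {p}) \<inter> (F k' - {p}) = R" using U'(3) k by blast
        ultimately show "F k \<inter> F k' = insert p R" by blast
      qed
      thus ?thesis using U'(1,2) by (intro exI[of _ U'] exI[of _ "insert p R"]) auto
    next
      case False
      hence cnt: "\<And>p. countable {k\<in>U. p \<in> F k}" by blast
      have exs: "\<exists>x. x \<in> U \<and> (\<lambda>C x. x \<notin> C \<and> (\<forall>c\<in>C \<inter> U. F x \<inter> F c = {})) C x" if C: "countable C" for C
      proof -
        let ?B = "C \<union> (\<Union>p\<in>(\<Union>c\<in>C \<inter> U. F c). {k\<in>U. p \<in> F k})"
        have "countable (\<Union>c\<in>C \<inter> U. F c)" using C a by (intro countable_UN) (auto intro: countable_finite)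
        hence "countable (\<Union>p\<in>(\<Union>c\<in>C \<inter> U. F c). {k\<in>U. p \<in> F k})" by (rule countable_UN[OF _ cnt])
        hence "countable ?B" by (rule countable_Un[OF C])
        hence "\<not> U \<subseteq> ?B" using a countable_subset[of U ?B] by blast
        then obtain x where "x \<in> U" "x \<notin> ?B" by blast
        thus ?thesis by blast
      qed
      have "\<exists>g::'a \<Rightarrow> _. \<forall>\<xi>. g \<xi> \<in> U \<and> (\<lambda>C x. x \<notin> C \<and> (\<forall>c\<in>C \<inter> U. F x \<inter> F c = {})) (g ` {\<beta>. \<beta> < \<xi>}) (g \<xi>)"
        by (rule omega_rec[OF om]) (rule exs)
      then obtain g :: "'a \<Rightarrow> _" where g: "\<forall>\<xi>. g \<xi> \<in> U \<and> g \<xi> \<notin> g ` {\<beta>. \<beta> < \<xi>} \<and>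
          (\<forall>c\<in>g ` {\<beta>. \<beta> < \<xi>} \<inter> U. F (g \<xi>) \<inter> F c = {})"
        by auto
      have disj: "F (g \<xi>) \<inter> F (g \<eta>) = {}" if "\<eta> < \<xi>" for \<xi> \<eta>
      proof -
        have "g \<eta> \<in> g ` {\<beta>. \<beta> < \<xi>} \<inter> U" using that g by simp
        moreover have "\<forall>c\<in>g ` {\<beta>. \<beta> < \<xi>} \<inter> U. F (g \<xi>) \<inter> F c = {}" using g by simp
        ultimately show ?thesis by simp
      qed
      have "inj g"
      proof (rule injI)
        fix a b assume "g a = g b"
        show "a = b"
        proof (rule ccontr)
          assume "a \<noteq> b"
          hence "a < b \<or> b < a" by auto
          thus False using g \<open>g a = g b\<close> by (metis (mono_tags, lifting) image_eqI mem_Collect_eq)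
        qed
      qed
      hence "uncountable (range g)" using uncountable_UNIV_omega[OF om]
        by (simp add: countable_image_inj_eq)
      moreover have "\<forall>k\<in>range g. \<forall>k'\<in>range g. k \<noteq> k' \<longrightarrow> F k \<inter> F k' = {}"
      proof (intro ballI impI)
        fix k k' assume "k \<in> range g" "k' \<in> range g" "k \<noteq> k'"
        then obtain a b where ab: "k = g a" "k' = g b" "a \<noteq> b" by blast
        show "F k \<inter> F k' = {}"
        proof (cases "a < b")
          case True thus ?thesis using disj[of a b] ab by blast
        next
          case False hence "b < a" using ab(3) by simp
          thus ?thesis using disj[of b a] ab by blast
        qed
      qed
      moreover have "range g \<subseteq> U" using g by auto
      ultimately show ?thesis by (intro exI[of _ "range g"] exI[of _ "{}"]) simp
    qed
  qed
qed

lemma delta_system: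
  assumes om: "omega1_like TYPE('a::wellorder)"
    and U: "uncountable U" and fin: "\<And>k. k \<in> U \<Longrightarrow> finite (F k)"
  shows "\<exists>U' R. U' \<subseteq> U \<and> uncountable U' \<and> (\<forall>k\<in>U'. \<forall>k'\<in>U'. k \<noteq> k' \<longrightarrow> F k \<inter> F k' = R)"
proof -
  obtain n :: nat where n: "uncountable {k\<in>U. card (F k) = n}"
    using pigeon_type[OF U, of "\<lambda>k. card (F k)"] by blast
  have h: "uncountable {k\<in>U. card (F k) = n} \<and> (\<forall>k\<in>{k\<in>U. card (F k) = n}. finite (F k) \<and> card (F k) = n)"
    using n fin by simp
  have "\<exists>U' R. U' \<subseteq> {k\<in>U. card (F k) = n} \<and> uncountable U' \<and> (\<forall>k\<in>U'. \<forall>k'\<in>U'. k \<noteq> k' \<longrightarrow> F k \<inter> F k' = R)"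
    by (rule delta_n[OF om, rule_format, OF h])
  then obtain U' R where "U' \<subseteq> {k\<in>U. card (F k) = n}" "uncountable U'"
    "\<forall>k\<in>U'. \<forall>k'\<in>U'. k \<noteq> k' \<longrightarrow> F k \<inter> F k' = R" by blast
  thus ?thesis by (intro exI[of _ U'] exI[of _ R]) auto
qed

lemma TP_D: "TP y F e \<Longrightarrow> finite G \<Longrightarrow> L2_set y (G \<inter> - F) \<le> e"
  unfolding TP_def by (erule allE[of _ "G \<inter> - F"]) auto

lemma pair_bound:
  fixes y1 y2 :: "'a \<Rightarrow> real"
  assumes fin: "finite R" and dj: "R \<inter> A1 = {}" "R \<inter> A2 = {}" "A1 \<inter> A2 = {}"
    and t1: "TP y1 (R \<union> A1) e" and t2: "TP y2 (R \<union> A2) e"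
    and r: "L2_set (\<lambda>a. y1 a - y2 a) R \<le> e" and G: "finite G"
  defines "u \<equiv> \<lambda>a. (if a \<in> A1 then y1 a else 0) - (if a \<in> A2 then y2 a else 0)"
  shows "L2_set (\<lambda>a. y1 a - y2 a) G \<le> L2_set u G + 3*e \<and> L2_set u G \<le> L2_set (\<lambda>a. y1 a - y2 a) G + 3*e"
proof -
  define w where "w = (\<lambda>a. y1 a - y2 a)"
  define r1 where "r1 = (\<lambda>a. if a \<in> R then w a else 0)"
  define r2 where "r2 = (\<lambda>a. if a \<in> - (R \<union> A1) then y1 a else 0)"
  define r3 where "r3 = (\<lambda>a. if a \<in> - (R \<union> A2) then - y2 a else 0)"
  have eq1: "w a = u a + r1 a + r2 a + r3 a" for a
    using dj unfolding w_def u_def r1_def r2_def r3_def by auto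
  have eq2: "u a = w a + (- r1 a) + (- r2 a) + (- r3 a)" for a
    using eq1[of a] by simp
  have b1: "L2_set r1 G \<le> e"
  proof -
    have "L2_set r1 G = L2_set w (G \<inter> R)" unfolding r1_def by (rule L2_restrict[OF G])
    also have "\<dots> \<le> L2_set w R" by (rule L2_subset[OF fin]) auto
    finally show ?thesis using r unfolding w_def by simp
  qed
  have b2: "L2_set r2 G \<le> e"
  proof -
    have "L2_set r2 G = L2_set y1 (G \<inter> - (R \<union> A1))" unfolding r2_def by (rule L2_restrict[OF G])
    also have "\<dots> \<le> e" by (rule TP_D[OF t1 G])
    finally show ?thesis .
  qed
  have b3: "L2_set r3 G \<le> e"
  proof -
    have "L2_set r3 G = L2_set (\<lambda>a. - y2 a) (G \<inter> - (R \<union> A2))" unfolding r3_def by (rule L2_restrict[OF G])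
    also have "\<dots> = L2_set y2 (G \<inter> - (R \<union> A2))" by (rule L2_uminus)
    also have "\<dots> \<le> e" by (rule TP_D[OF t2 G])
    finally show ?thesis .
  qed
  have e1: "L2_set w G = L2_set (\<lambda>a. u a + r1 a + r2 a + r3 a) G"
    by (rule L2_set_cong) (simp_all only: eq1)
  have e2: "L2_set u G = L2_set (\<lambda>a. w a + (- r1 a) + (- r2 a) + (- r3 a)) G"
    by (rule L2_set_cong) (simp_all only: eq2)
  have "L2_set w G \<le> L2_set u G + L2_set r1 G + L2_set r2 G + L2_set r3 G"
    unfolding e1 by (rule L2_tri4)
  moreover have "L2_set u G \<le> L2_set w G + L2_set (\<lambda>a. - r1 a) G + L2_set (\<lambda>a. - r2 a) G + L2_set (\<lambda>a. - r3 a) G"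
    unfolding e2 by (rule L2_tri4)
  ultimately show ?thesis using b1 b2 b3 unfolding w_def L2_uminus by linarith
qed

lemma sq_bound:
  assumes "\<And>G. finite G \<Longrightarrow> L2_set w G \<le> M"
  shows "(\<lambda>a. (w a)\<^sup>2) summable_on UNIV" "0 \<le> M"
    "\<And>G. finite G \<Longrightarrow> sum (\<lambda>a. (w a)\<^sup>2) G \<le> M\<^sup>2"
proof -
  show M: "0 \<le> M" using assms[of "{}"] by simp
  show b: "sum (\<lambda>a. (w a)\<^sup>2) G \<le> M\<^sup>2" if "finite G" for G
  proof -
    have "(L2_set w G)\<^sup>2 \<le> M\<^sup>2" using assms[OF that] by (intro power_mono) auto
    thus ?thesis by (simp add: L2_sq)
  qed
  show "(\<lambda>a. (w a)\<^sup>2) summable_on UNIV"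
    by (rule nonneg_bdd_above_summable_on) (auto intro!: bdd_aboveI2[where M="M\<^sup>2"] b)
qed

lemma norm2_upper:
  assumes "\<And>G. finite G \<Longrightarrow> L2_set w G \<le> M"
  shows "norm2 w \<le> M"
proof -
  note s = sq_bound[OF assms]
  have "infsum (\<lambda>a. (w a)\<^sup>2) UNIV \<le> M\<^sup>2"
    using s(3) by (intro infsum_le_finite_sums[OF s(1)]) auto
  hence "sqrt (infsum (\<lambda>a. (w a)\<^sup>2) UNIV) \<le> sqrt (M\<^sup>2)" by (rule real_sqrt_le_mono)
  thus ?thesis using s(2) unfolding norm2_def by simp
qed

lemma norm2_lower:
  assumes "\<And>G. finite G \<Longrightarrow> L2_set w G \<le> M" and "finite G"
  shows "L2_set w G \<le> norm2 w"
proof -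
  note s = sq_bound[OF assms(1)]
  have "sum (\<lambda>a. (w a)\<^sup>2) G \<le> infsum (\<lambda>a. (w a)\<^sup>2) UNIV"
    by (rule finite_sum_le_infsum[OF s(1) assms(2)]) auto
  thus ?thesis unfolding norm2_def L2_set_def by (rule real_sqrt_le_mono)
qed

lemma T0_empty: "{} \<in> T0_family c"
  unfolding T0_family_def pairs2_def by auto

lemma pairs2_E: "p \<in> pairs2 S \<Longrightarrow> \<exists>x y. x \<noteq> y \<and> x \<in> S \<and> y \<in> S \<and> p = {x, y}"
  unfolding pairs2_def by (auto simp: card_2_iff)

lemma pairs2_I: "x \<noteq> y \<Longrightarrow> x \<in> S \<Longrightarrow> y \<in> S \<Longrightarrow> {x, y} \<in> pairs2 S"
  unfolding pairs2_def by auto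

lemma T0_single: "{a} \<in> T0_family c"
  unfolding T0_family_def by (auto dest!: pairs2_E)


lemma T0_iff: "b \<in> T0_family c \<longleftrightarrow> finite b \<and> (\<forall>x\<in>b. \<forall>y\<in>b. x \<noteq> y \<longrightarrow> fst (c {x, y}) = 0)"
  unfolding T0_family_def by (auto dest!: pairs2_E intro: pairs2_I)

lemma T0_subset: "b \<in> T0_family c \<Longrightarrow> b' \<subseteq> b \<Longrightarrow> b' \<in> T0_family c"
  unfolding T0_iff by (auto intro: finite_subset)

lemma otimes_I: "x \<in> A \<Longrightarrow> y \<in> B \<Longrightarrow> {x, y} \<in> otimes A B"
  unfolding otimes_def by blast

lemma T0_union:
  assumes "b1 \<in> T0_family c" "b2 \<in> T0_family c" "(fst \<circ> c) ` otimes A1 A2 = {0}"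
    "b1 \<subseteq> A1" "b2 \<subseteq> A2"
  shows "b1 \<union> b2 \<in> T0_family c"
proof -
  have cr: "fst (c {x, y}) = 0" if "x \<in> A1" "y \<in> A2" for x y
  proof -
    have "{x, y} \<in> otimes A1 A2" using that by (rule otimes_I)
    thus ?thesis using assms(3) by (metis comp_apply image_eqI singletonD)
  qed
  have f: "finite b1" "finite b2" and h1: "\<forall>x\<in>b1. \<forall>y\<in>b1. x \<noteq> y \<longrightarrow> fst (c {x, y}) = 0"
    and h2: "\<forall>x\<in>b2. \<forall>y\<in>b2. x \<noteq> y \<longrightarrow> fst (c {x, y}) = 0"
    using assms(1,2) unfolding T0_iff by auto
  have "fst (c {x, y}) = 0" if xy: "x \<in> b1 \<union> b2" "y \<in> b1 \<union> b2" "x \<noteq> y" for x y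
  proof -
    consider "x \<in> b1" "y \<in> b1" | "x \<in> b2" "y \<in> b2" | "x \<in> b1" "y \<in> b2" | "x \<in> b2" "y \<in> b1"
      using xy by blast
    thus ?thesis
    proof cases
      case 1 thus ?thesis using h1 xy by blast
    next
      case 2 thus ?thesis using h2 xy by blast
    next
      case 3 thus ?thesis using cr assms(4,5) by blast
    next
      case 4
      hence "fst (c {y, x}) = 0" using cr assms(4,5) by blast
      thus ?thesis by (simp add: insert_commute)
    qed
  qed
  thus ?thesis unfolding T0_iff using f by blast
qed

lemma T0_cross1:
  assumes "b \<in> T0_family c" "(fst \<circ> c) ` otimes A1 A2 = {1}" "A1 \<inter> A2 = {}"
  shows "b \<inter> A1 = {} \<or> b \<inter> A2 = {}"
proof (rule ccontr)
  assume "\<not> ?thesis"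
  then obtain x y where xy: "x \<in> b" "x \<in> A1" "y \<in> b" "y \<in> A2" by blast
  hence "x \<noteq> y" using assms(3) by blast
  hence "fst (c {x, y}) = 0" using assms(1) xy unfolding T0_iff by blast
  moreover have "{x, y} \<in> otimes A1 A2" using xy by (intro otimes_I)
  hence "fst (c {x, y}) = 1" using assms(2) by (metis comp_apply image_eqI singletonD)
  ultimately show False by simp
qed

lemma normA_upper:
  assumes "\<And>b. b \<in> T0_family c \<Longrightarrow> L2_set w b \<le> M"
  shows "normA (T0_family c) w \<le> M"
  unfolding normA_def using assms T0_empty[of c] unfolding L2_set_def[symmetric]
  by (intro cSUP_least) auto

lemma normA_lower:
  assumes "\<And>G. finite G \<Longrightarrow> L2_set w G \<le> M" "b \<in> T0_family c"
  shows "L2_set w b \<le> normA (T0_family c) w"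
proof -
  have "bdd_above ((\<lambda>A. L2_set w A) ` T0_family c)"
    using assms(1) by (intro bdd_aboveI2[where M=M]) (auto simp: T0_family_def)
  thus ?thesis unfolding normA_def L2_set_def[symmetric] using assms(2) by (rule cSUP_upper2) auto
qed

lemma pair_est:
  fixes R AX AY :: "'a set" and yx yy :: "'a \<Rightarrow> real" and e :: real
    and c :: "'a set \<Rightarrow> 'i::zero_neq_one \<times> 'j"
  assumes fin: "finite R" "finite AX" "finite AY"
    and dj: "R \<inter> AX = {}" "R \<inter> AY = {}" "AX \<inter> AY = {}"
    and t1: "TP yx (R \<union> AX) e" and t2: "TP yy (R \<union> AY) e"
    and r: "L2_set (\<lambda>a. yx a - yy a) R \<le> e"
  defines "w \<equiv> (\<lambda>a. yx a - yy a)"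
  defines "M \<equiv> sqrt ((L2_set yx AX)\<^sup>2 + (L2_set yy AY)\<^sup>2) + 3 * e"
  shows "\<And>G. finite G \<Longrightarrow> L2_set w G \<le> M"
    and "norm2 w \<le> M"
    and "sqrt ((L2_set yx AX)\<^sup>2 + (L2_set yy AY)\<^sup>2) - 3 * e \<le> norm2 w"
    and "\<And>bx bz. bx \<subseteq> AX \<Longrightarrow> bz \<subseteq> AY \<Longrightarrow> bx \<union> bz \<in> T0_family c \<Longrightarrow>
           sqrt ((L2_set yx bx)\<^sup>2 + (L2_set yy bz)\<^sup>2) - 3 * e \<le> normA (T0_family c) w"
    and "\<And>mx my. (\<forall>b\<in>T0_family c. b \<inter> AX = {} \<or> b \<inter> AY = {}) \<Longrightarrow>
           (\<forall>b\<in>T0_family c. b \<subseteq> AX \<longrightarrow> L2_set yx b \<le> mx) \<Longrightarrow>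
           (\<forall>b\<in>T0_family c. b \<subseteq> AY \<longrightarrow> L2_set yy b \<le> my) \<Longrightarrow>
           normA (T0_family c) w \<le> max mx my + 3 * e"
proof -
  define u where "u \<equiv> \<lambda>a. (if a \<in> AX then yx a else 0) - (if a \<in> AY then yy a else 0)"
  have pb: "L2_set w G \<le> L2_set u G + 3*e \<and> L2_set u G \<le> L2_set w G + 3*e" if "finite G" for G
    unfolding w_def u_def by (rule pair_bound[OF fin(1) dj t1 t2 r that])
  have u1: "L2_set u b = L2_set yx b" if "b \<subseteq> AX" for b
    by (rule L2_set_cong) (use that dj in \<open>auto simp: u_def\<close>)
  have u2: "L2_set u b = L2_set yy b" if "b \<subseteq> AY" for b
  proof -
    have "L2_set u b = L2_set (\<lambda>a. - yy a) b"
      by (rule L2_set_cong) (use that dj in \<open>auto simp: u_def\<close>)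
    thus ?thesis by (simp add: L2_uminus)
  qed
  have uU: "L2_set u (bx \<union> bz) = sqrt ((L2_set yx bx)\<^sup>2 + (L2_set yy bz)\<^sup>2)" if "bx \<subseteq> AX" "bz \<subseteq> AY" for bx bz
  proof -
    have f: "finite bx" "finite bz" using that fin finite_subset by auto
    have "bx \<inter> bz = {}" using that dj by blast
    hence "(L2_set u (bx \<union> bz))\<^sup>2 = (L2_set u bx)\<^sup>2 + (L2_set u bz)\<^sup>2" by (rule L2_union_sq[OF f])
    hence "L2_set u (bx \<union> bz) = sqrt ((L2_set u bx)\<^sup>2 + (L2_set u bz)\<^sup>2)"
      by (metis L2_set_nonneg real_sqrt_abs abs_of_nonneg)
    thus ?thesis using u1[OF that(1)] u2[OF that(2)] by simp
  qed
  have uG: "L2_set u G = L2_set u (G \<inter> (AX \<union> AY))" if "finite G" for G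
  proof -
    have "L2_set u G = L2_set (\<lambda>a. if a \<in> AX \<union> AY then u a else 0) G"
      by (rule L2_set_cong) (auto simp: u_def)
    also have "\<dots> = L2_set u (G \<inter> (AX \<union> AY))" by (rule L2_restrict[OF that])
    finally show ?thesis .
  qed
  show bound: "L2_set w G \<le> M" if "finite G" for G
  proof -
    have "L2_set u G = L2_set u (G \<inter> (AX \<union> AY))" by (rule uG[OF that])
    also have "\<dots> \<le> L2_set u (AX \<union> AY)" by (rule L2_subset) (use fin in auto)
    also have "\<dots> = sqrt ((L2_set yx AX)\<^sup>2 + (L2_set yy AY)\<^sup>2)" by (rule uU) auto
    finally show ?thesis using pb[OF that] unfolding M_def by linarith
  qed
  show "norm2 w \<le> M" by (rule norm2_upper) (rule bound)
  show "sqrt ((L2_set yx AX)\<^sup>2 + (L2_set yy AY)\<^sup>2) - 3 * e \<le> norm2 w"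
  proof -
    have fA: "finite (AX \<union> AY)" using fin by auto
    have "L2_set w (AX \<union> AY) \<le> norm2 w" by (rule norm2_lower[OF bound fA])
    moreover have "L2_set u (AX \<union> AY) = sqrt ((L2_set yx AX)\<^sup>2 + (L2_set yy AY)\<^sup>2)" by (rule uU) auto
    ultimately show ?thesis using pb[OF fA] by linarith
  qed
  show "sqrt ((L2_set yx bx)\<^sup>2 + (L2_set yy bz)\<^sup>2) - 3 * e \<le> normA (T0_family c) w"
    if "bx \<subseteq> AX" "bz \<subseteq> AY" "bx \<union> bz \<in> T0_family c" for bx bz
  proof -
    have fb: "finite (bx \<union> bz)" using that(3) unfolding T0_family_def by auto
    have "L2_set w (bx \<union> bz) \<le> normA (T0_family c) w" by (rule normA_lower[OF bound that(3)])
    thus ?thesis using pb[OF fb] uU[OF that(1,2)] by linarith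
  qed
  show "normA (T0_family c) w \<le> max mx my + 3 * e"
    if h: "\<forall>b\<in>T0_family c. b \<inter> AX = {} \<or> b \<inter> AY = {}"
      "\<forall>b\<in>T0_family c. b \<subseteq> AX \<longrightarrow> L2_set yx b \<le> mx"
      "\<forall>b\<in>T0_family c. b \<subseteq> AY \<longrightarrow> L2_set yy b \<le> my" for mx my
  proof (rule normA_upper)
    fix b assume b: "b \<in> T0_family c"
    hence fb: "finite b" unfolding T0_family_def by auto
    have "L2_set u b \<le> max mx my"
    proof (cases "b \<inter> AX = {}")
      case True
      hence "L2_set u b = L2_set u (b \<inter> AY)" using uG[OF fb] by (simp add: Int_Un_distrib)
      also have "\<dots> = L2_set yy (b \<inter> AY)" by (rule u2) auto
      also have "\<dots> \<le> my" using h(3) T0_subset[OF b, of "b \<inter> AY"] by auto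
      finally show ?thesis by simp
    next
      case False
      hence "b \<inter> AY = {}" using h(1) b by blast
      hence "L2_set u b = L2_set u (b \<inter> AX)" using uG[OF fb] by (simp add: Int_Un_distrib)
      also have "\<dots> = L2_set yx (b \<inter> AX)" by (rule u1) auto
      also have "\<dots> \<le> mx" using h(2) T0_subset[OF b, of "b \<inter> AX"] by auto
      finally show ?thesis by simp
    qed
    thus "L2_set w b \<le> max mx my + 3 * e" using pb[OF fb] by linarith
  qed
qed

lemma bigfin:
  assumes "y \<in> l2" "r > 0"
  shows "finite {a. r \<le> \<bar>y a\<bar>}"
proof -
  obtain F where F: "finite F" "TP y F (r/2)" using tail_exists[OF assms(1), of "r/2"] assms(2) by auto
  have "{a. r \<le> \<bar>y a\<bar>} \<subseteq> F"
  proof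
    fix a assume a: "a \<in> {a. r \<le> \<bar>y a\<bar>}"
    show "a \<in> F"
    proof (rule ccontr)
      assume "a \<notin> F"
      hence "{a} \<inter> - F = {a}" by auto
      hence "L2_set y {a} \<le> r/2" using TP_D[OF F(2), of "{a}"] by simp
      thus False using a assms(2) by (simp add: L2_single)
    qed
  qed
  thus ?thesis using F(1) finite_subset by blast
qed

lemma floor_close:
  fixes x x' h :: real
  assumes "h > 0" "\<lfloor>x / h\<rfloor> = \<lfloor>x' / h\<rfloor>"
  shows "\<bar>x - x'\<bar> < h"
proof -
  have "of_int \<lfloor>x/h\<rfloor> \<le> x/h \<and> x/h < of_int (\<lfloor>x/h\<rfloor> + 1)" by (rule floor_correct)
  moreover have "of_int \<lfloor>x'/h\<rfloor> \<le> x'/h \<and> x'/h < of_int (\<lfloor>x'/h\<rfloor> + 1)" by (rule floor_correct)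
  ultimately have "\<bar>x / h - x' / h\<bar> < 1" unfolding assms(2) by linarith
  hence "\<bar>(x - x') / h\<bar> < 1" by (simp add: diff_divide_distrib)
  hence "\<bar>x - x'\<bar> / h < 1" using assms(1) by (simp add: abs_divide)
  thus ?thesis using pos_divide_less_eq[OF assms(1)] by simp
qed

lemma floor_interval:
  fixes s e :: real
  assumes "e > 0"
  shows "e * \<lfloor>s / e\<rfloor> \<le> s \<and> s < e * \<lfloor>s / e\<rfloor> + e"
proof -
  have "of_int \<lfloor>s/e\<rfloor> \<le> s/e \<and> s/e < of_int (\<lfloor>s/e\<rfloor> + 1)" by (rule floor_correct)
  hence a: "of_int \<lfloor>s / e\<rfloor> \<le> s / e" "s / e < of_int \<lfloor>s / e\<rfloor> + 1" by auto
  have "e * of_int \<lfloor>s / e\<rfloor> \<le> e * (s / e)" using a(1) assms by (intro mult_left_mono) auto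
  moreover have "e * (s / e) < e * (of_int \<lfloor>s / e\<rfloor> + 1)" using a(2) assms by (intro mult_strict_left_mono) auto
  moreover have "e * (s / e) = s" using assms by simp
  ultimately show ?thesis by (simp add: distrib_left del: times_divide_eq_right)
qed

lemma root_close:
  fixes y1 y2 :: "'a \<Rightarrow> real"
  assumes "finite R" "e > 0"
    and "\<forall>a\<in>R. \<lfloor>y1 a / (e / (card R + 1))\<rfloor> = \<lfloor>y2 a / (e / (card R + 1))\<rfloor>"
  shows "L2_set (\<lambda>a. y1 a - y2 a) R \<le> e"
proof -
  define h where "h = e / (card R + 1)"
  have h: "h > 0" unfolding h_def using assms(2) by simp
  have "\<forall>a\<in>R. \<bar>y1 a - y2 a\<bar> \<le> h" using floor_close[OF h] assms(3) unfolding h_def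
    by (simp add: less_imp_le)
  hence "L2_set (\<lambda>a. \<bar>y1 a - y2 a\<bar>) R \<le> L2_set (\<lambda>a. h) R" by (intro L2_set_mono) auto
  moreover have "L2_set (\<lambda>a. y1 a - y2 a) R = L2_set (\<lambda>a. \<bar>y1 a - y2 a\<bar>) R"
    unfolding L2_set_def by simp
  moreover have "L2_set (\<lambda>a. h) R = sqrt (card R) * h" using h by (simp add: L2_set_constant)
  moreover have "sqrt (card R) \<le> card R + 1"
  proof -
    have "sqrt (real (card R)) \<le> sqrt ((card R + 1)\<^sup>2)"
      by (intro real_sqrt_le_mono) (simp add: power2_eq_square algebra_simps)
    thus ?thesis by simp
  qed
  hence "sqrt (card R) * h \<le> (card R + 1) * h" using h by (intro mult_right_mono) auto
  moreover have "(card R + 1) * h = e" unfolding h_def by simp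
  ultimately show ?thesis by linarith
qed

lemma sqrt2_lower:
  fixes x1 x2 m :: real
  assumes "0 \<le> x1" "0 \<le> x2" "m \<le> x1" "m \<le> x2"
  shows "sqrt 2 * m \<le> sqrt (x1\<^sup>2 + x2\<^sup>2)"
proof (cases "m \<le> 0")
  case True
  hence "sqrt 2 * m \<le> 0" by (simp add: mult_nonneg_nonpos)
  thus ?thesis by (meson order_trans real_sqrt_ge_zero add_nonneg_nonneg zero_le_power2)
next
  case False
  hence "m\<^sup>2 \<le> x1\<^sup>2" "m\<^sup>2 \<le> x2\<^sup>2" using assms by (auto intro!: power_mono)
  hence "sqrt (2 * m\<^sup>2) \<le> sqrt (x1\<^sup>2 + x2\<^sup>2)" by (intro real_sqrt_le_mono) simp
  moreover have "sqrt (2 * m\<^sup>2) = sqrt 2 * m" using False by (simp add: real_sqrt_mult)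
  ultimately show ?thesis by simp
qed

lemma sqrt2_upper:
  fixes x1 x2 m :: real
  assumes "0 \<le> x1" "0 \<le> x2" "x1 \<le> m" "x2 \<le> m"
  shows "sqrt (x1\<^sup>2 + x2\<^sup>2) \<le> sqrt 2 * m"
proof -
  have m: "0 \<le> m" using assms by simp
  have "x1\<^sup>2 \<le> m\<^sup>2" "x2\<^sup>2 \<le> m\<^sup>2" using assms by (auto intro!: power_mono)
  hence "sqrt (x1\<^sup>2 + x2\<^sup>2) \<le> sqrt (2 * m\<^sup>2)" by (intro real_sqrt_le_mono) simp
  moreover have "sqrt (2 * m\<^sup>2) = sqrt 2 * m" using m by (simp add: real_sqrt_mult)
  ultimately show ?thesis by simp
qed

lemma sqrt2_bounds: "1.4 \<le> sqrt (2::real)" "sqrt (2::real) \<le> 1.5"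
proof -
  show "1.4 \<le> sqrt (2::real)" by (rule real_le_rsqrt) (simp add: power2_eq_square)
  have "sqrt 2 \<le> sqrt ((1.5::real)\<^sup>2)" by (intro real_sqrt_le_mono) (simp add: power2_eq_square)
  thus "sqrt (2::real) \<le> 1.5" by simp
qed

lemma two_elems:
  assumes "uncountable X"
  obtains x1 x2 where "x1 \<in> X" "x2 \<in> X" "x1 \<noteq> x2"
proof -
  obtain x1 where x1: "x1 \<in> X" using assms by (metis countable_empty ex_in_conv)
  have "uncountable (X - {x1})" using assms by (metis countable_insert insert_Diff x1)
  then obtain x2 where "x2 \<in> X - {x1}" by (metis countable_empty ex_in_conv)
  thus ?thesis using that x1 by blast
qed

theorem proposition4p5:
  fixes c :: "'a::wellorder set \<Rightarrow> 'i::zero_neq_one \<times> 'j"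
    and I :: "'i set" and J :: "'j set"
  assumes "omega1_like TYPE('a)"
    and "strong_T_coloring c I J"
  shows "\<not> (\<exists>Y \<subseteq> l2. uncountable Y \<and> equilateral (norm2A (T0_family c)) Y)"
proof
  note om = assms(1)
  have strong: "(\<exists>\<xi> \<eta>. \<xi> < \<eta> \<and> (fst \<circ> c) ` otimes (A \<xi>) (A \<eta>) = {0}) \<and>
      (\<exists>\<xi> \<eta>. \<xi> < \<eta> \<and> (fst \<circ> c) ` otimes (A \<xi>) (A \<eta>) = {1})"
    if "\<forall>\<xi>. finite (A \<xi>) \<and> A \<xi> \<noteq> {}" "\<forall>\<xi> \<eta>. \<xi> \<noteq> \<eta> \<longrightarrow> A \<xi> \<inter> A \<eta> = {}"
    for A :: "'a \<Rightarrow> 'a set"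
  proof -
    have "\<forall>A :: 'a \<Rightarrow> 'a set.
        (\<forall>\<xi>. finite (A \<xi>) \<and> A \<xi> \<noteq> {}) \<and>
        (\<forall>\<xi> \<eta>. \<xi> \<noteq> \<eta> \<longrightarrow> A \<xi> \<inter> A \<eta> = {}) \<longrightarrow>
        (\<exists>\<xi> \<eta>. \<xi> < \<eta> \<and> (fst \<circ> c) ` otimes (A \<xi>) (A \<eta>) = {0}) \<and>
        (\<exists>\<xi> \<eta>. \<xi> < \<eta> \<and> (fst \<circ> c) ` otimes (A \<xi>) (A \<eta>) = {1})"
      using assms(2) unfolding strong_T_coloring_def by (rule conjunct2)
    thus ?thesis using that by (elim allE[of _ A]) (elim impE, rule conjI)
  qed
  assume "\<exists>Y \<subseteq> l2. uncountable Y \<and> equilateral (norm2A (T0_family c)) Y"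
  then obtain Y \<delta> where Yl2: "Y \<subseteq> l2" and unc: "uncountable Y" and dpos: "\<delta> > 0"
    and eqd: "\<forall>y\<in>Y. \<forall>y'\<in>Y. y \<noteq> y' \<longrightarrow> norm2A (T0_family c) (y - y') = \<delta>"
    unfolding equilateral_def by auto
  have eqd': "norm2 (\<lambda>a. y a - y' a) + normA (T0_family c) (\<lambda>a. y a - y' a) = \<delta>"
    if "y \<in> Y" "y' \<in> Y" "y \<noteq> y'" for y y'
  proof -
    have "(\<lambda>a. y a - y' a) = y - y'" by (simp add: fun_diff_def)
    thus ?thesis using eqd that unfolding norm2A_def by simp
  qed
  define P where "P r = {a. \<exists>y\<in>Y. r \<le> \<bar>y a\<bar>}" for r :: real
  show False
  proof (cases "\<exists>n::nat. uncountable (P (1 / Suc n))")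
    case False
    hence cP: "countable (P (1 / Suc n))" for n by blast
    define S where "S = (\<Union>n. P (1 / Suc n))"
    have cS: "countable S" unfolding S_def using cP by blast
    have supp: "y a = 0" if "y \<in> Y" "a \<notin> S" for y a
    proof (rule ccontr)
      assume "y a \<noteq> 0"
      then obtain n :: nat where n: "n > 0" "inverse (of_nat n) < \<bar>y a\<bar>"
        using ex_inverse_of_nat_less[of "\<bar>y a\<bar>"] by auto
      then obtain m where "n = Suc m" by (cases n) auto
      hence "1 / Suc m \<le> \<bar>y a\<bar>" using n by (simp add: inverse_eq_divide)
      hence "a \<in> P (1 / Suc m)" unfolding P_def using that by blast
      thus False using that unfolding S_def by blast
    qed
    define e where "e = \<delta> / 7"
    have epos: "e > 0" unfolding e_def using dpos by simp
    have "\<forall>y\<in>Y. \<exists>F. finite F \<and> TP y F e" using tail_exists Yl2 epos by blast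
    then obtain Fy where Fy: "\<forall>y\<in>Y. finite (Fy y) \<and> TP y (Fy y) e" by metis
    have TPS: "TP y (Fy y \<inter> S) e" if y: "y \<in> Y" for y
      unfolding TP_def
    proof safe
      fix G assume G: "finite G" "G \<inter> (Fy y \<inter> S) = {}"
      have "L2_set y G = L2_set (\<lambda>a. if a \<in> S then y a else 0) G"
        by (rule L2_set_cong) (use supp[OF y] in auto)
      also have "\<dots> = L2_set y (G \<inter> S)" by (rule L2_restrict[OF G(1)])
      also have "\<dots> = L2_set y ((G \<inter> S) \<inter> - Fy y)" using G(2) by (intro arg_cong[where f="L2_set y"]) blast
      also have "\<dots> \<le> e" by (rule TP_D) (use Fy y G in auto)
      finally show "L2_set y G \<le> e" .
    qed
    obtain R where R: "R \<in> {F. finite F \<and> F \<subseteq> S}" and Y1: "uncountable {y\<in>Y. Fy y \<inter> S = R}"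
      using pigeon[OF unc, of "\<lambda>y. Fy y \<inter> S" "{F. finite F \<and> F \<subseteq> S}"] Fy
        countable_Collect_finite_subset[OF cS] by auto
    define key where "key y = map (\<lambda>a. \<lfloor>y a / (e / (card R + 1))\<rfloor>) (sorted_list_of_set R)" for y :: "'a \<Rightarrow> real"
    obtain K :: "int list" where Y2: "uncountable {y\<in>{y\<in>Y. Fy y \<inter> S = R}. key y = K}"
      using pigeon_type[OF Y1, of key] by blast
    obtain y1 y2 where y12: "y1 \<in> {y\<in>{y\<in>Y. Fy y \<inter> S = R}. key y = K}"
      "y2 \<in> {y\<in>{y\<in>Y. Fy y \<inter> S = R}. key y = K}" "y1 \<noteq> y2"
      using two_elems[OF Y2] by blast
    have finR: "finite R" using R by simp
    have "key y1 = key y2" using y12 by simp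
    hence fl: "\<forall>a\<in>R. \<lfloor>y1 a / (e / (card R + 1))\<rfloor> = \<lfloor>y2 a / (e / (card R + 1))\<rfloor>"
      unfolding key_def using finR by simp
    have rc: "L2_set (\<lambda>a. y1 a - y2 a) R \<le> e" by (rule root_close[OF finR epos fl])
    have t1: "TP y1 (R \<union> {}) e" using TPS[of y1] y12 by simp
    have t2: "TP y2 (R \<union> {}) e" using TPS[of y2] y12 by simp
    note pe = pair_est[OF finR finite.emptyI finite.emptyI _ _ _ t1 t2 rc]
    have n2: "norm2 (\<lambda>a. y1 a - y2 a) \<le> 3 * e" using pe(2) by simp
    have nA: "normA (T0_family c) (\<lambda>a. y1 a - y2 a) \<le> 3 * e"
      by (rule normA_upper) (use pe(1) in \<open>auto simp: T0_family_def\<close>)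
    have "\<delta> \<le> 6 * e" using eqd'[of y1 y2] y12 n2 nA by auto
    thus False using dpos unfolding e_def by simp
  next
    case True
    then obtain n :: nat where Pn: "uncountable (P (1 / Suc n))" by blast
    define r :: real where "r = 1 / Suc n"
    have rpos: "r > 0" unfolding r_def by simp
    have "\<forall>a\<in>P r. \<exists>y. y \<in> Y \<and> r \<le> \<bar>y a\<bar>" unfolding P_def by blast
    then obtain ch where ch: "\<forall>a\<in>P r. ch a \<in> Y \<and> r \<le> \<bar>ch a a\<bar>" by metis
    define Y' where "Y' = ch ` P r"
    have Y'Y: "Y' \<subseteq> Y" unfolding Y'_def using ch by auto
    have uY': "uncountable Y'"
    proof
      assume cY: "countable Y'"
      have "P r \<subseteq> (\<Union>y\<in>Y'. {a. r \<le> \<bar>y a\<bar>})" unfolding Y'_def using ch by auto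
      moreover have "countable (\<Union>y\<in>Y'. {a. r \<le> \<bar>y a\<bar>})"
      proof (rule countable_UN[OF cY])
        fix y assume "y \<in> Y'"
        hence "y \<in> l2" using Y'Y Yl2 by auto
        thus "countable {a. r \<le> \<bar>y a\<bar>}" by (intro countable_finite bigfin rpos)
      qed
      ultimately show False using Pn unfolding r_def using countable_subset by blast
    qed
    define \<alpha> where "\<alpha> y = (SOME a. a \<in> P r \<and> ch a = y)" for y
    have \<alpha>: "\<alpha> y \<in> P r \<and> ch (\<alpha> y) = y" if "y \<in> Y'" for y
      unfolding \<alpha>_def by (rule someI_ex) (use that in \<open>auto simp: Y'_def\<close>)
    have \<alpha>r: "r \<le> \<bar>y (\<alpha> y)\<bar>" if "y \<in> Y'" for y using \<alpha>[OF that] ch by metis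
    have \<alpha>inj: "inj_on \<alpha> Y'" by (rule inj_onI) (metis \<alpha>)
    define e where "e = r / 1000"
    have epos: "e > 0" unfolding e_def using rpos by simp
    have "\<forall>y\<in>Y'. \<exists>F. finite F \<and> TP y F e" using tail_exists Yl2 Y'Y epos by blast
    then obtain Fy where Fy: "\<forall>y\<in>Y'. finite (Fy y) \<and> TP y (Fy y) e" by metis
    define F where "F y = insert (\<alpha> y) (Fy y)" for y
    have finF: "finite (F y)" if "y \<in> Y'" for y unfolding F_def using Fy that by simp
    have TPF: "TP y (F y) e" if "y \<in> Y'" for y
      using TP_mono[of y "Fy y" e "F y"] Fy that unfolding F_def by auto
    obtain U2 R where U2: "U2 \<subseteq> Y'" "uncountable U2" and
      dR: "\<forall>k\<in>U2. \<forall>k'\<in>U2. k \<noteq> k' \<longrightarrow> F k \<inter> F k' = R"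
      using delta_system[OF om uY', of F] finF by blast
    have RF: "R \<subseteq> F y" if y: "y \<in> U2" for y
    proof -
      obtain y1 y2 where yy: "y1 \<in> U2" "y2 \<in> U2" "y1 \<noteq> y2" using two_elems[OF U2(2)] by blast
      have "\<exists>y'\<in>U2. y' \<noteq> y"
      proof (cases "y1 = y")
        case True thus ?thesis using yy by (intro bexI[of _ y2]) auto
      next
        case False thus ?thesis using yy by (intro bexI[of _ y1]) auto
      qed
      then obtain y' where y': "y' \<in> U2" "y' \<noteq> y" by auto
      have "F y \<inter> F y' = R" using dR y y' by auto
      thus ?thesis by auto
    qed
    have finR: "finite R"
    proof -
      obtain y1 y2 where yy: "y1 \<in> U2" "y2 \<in> U2" "y1 \<noteq> y2" using two_elems[OF U2(2)] by blast
      have "R \<subseteq> F y1" by (rule RF[OF yy(1)])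
      moreover have "finite (F y1)" using finF U2(1) yy(1) by auto
      ultimately show ?thesis by (rule finite_subset)
    qed
    define U3 where "U3 = {y\<in>U2. \<alpha> y \<notin> R}"
    have uU3: "uncountable U3"
    proof
      assume cU3: "countable U3"
      have ij: "inj_on \<alpha> {y\<in>U2. \<alpha> y \<in> R}" by (rule inj_on_subset[OF \<alpha>inj]) (use U2(1) in auto)
      have fi: "finite (\<alpha> ` {y\<in>U2. \<alpha> y \<in> R})" by (rule finite_subset[OF _ finR]) auto
      have "finite {y\<in>U2. \<alpha> y \<in> R}" by (rule finite_imageD[OF fi ij])
      hence "countable (U3 \<union> {y\<in>U2. \<alpha> y \<in> R})" using cU3 by (simp add: countable_finite)
      moreover have "U2 \<subseteq> U3 \<union> {y\<in>U2. \<alpha> y \<in> R}" unfolding U3_def by auto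
      ultimately have "countable U2" by (rule countable_subset[rotated])
      thus False using U2(2) by simp
    qed
    define A where "A y = F y - R" for y
    define s where "s y = L2_set y (A y)" for y
    define ma where "ma y = Max ((\<lambda>b. L2_set y b) ` {b. b \<subseteq> A y \<and> b \<in> T0_family c})" for y
    have U3sub: "U3 \<subseteq> Y'" "U3 \<subseteq> U2" using U2(1) unfolding U3_def by auto
    have finA: "finite (A y)" if "y \<in> U3" for y using finF U3sub that unfolding A_def by auto
    have fin_bs: "finite {b. b \<subseteq> A y \<and> b \<in> T0_family c}" if "y \<in> U3" for y
    proof (rule finite_subset)
      show "{b. b \<subseteq> A y \<and> b \<in> T0_family c} \<subseteq> Pow (A y)" by auto
      show "finite (Pow (A y))" using finA[OF that] by simp
    qed
    have ma_ge: "L2_set y b \<le> ma y" if "y \<in> U3" "b \<subseteq> A y" "b \<in> T0_family c" for y b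
      unfolding ma_def
    proof (rule Max_ge)
      show "finite ((\<lambda>b. L2_set y b) ` {b. b \<subseteq> A y \<and> b \<in> T0_family c})"
        by (rule finite_imageI[OF fin_bs[OF that(1)]])
      show "L2_set y b \<in> (\<lambda>b. L2_set y b) ` {b. b \<subseteq> A y \<and> b \<in> T0_family c}"
        by (rule imageI) (use that(2,3) in simp)
    qed
    have ma_att: "\<exists>b. b \<subseteq> A y \<and> b \<in> T0_family c \<and> L2_set y b = ma y" if "y \<in> U3" for y
    proof -
      have "ma y \<in> (\<lambda>b. L2_set y b) ` {b. b \<subseteq> A y \<and> b \<in> T0_family c}"
        unfolding ma_def
      proof (rule Max_in)
        show "finite ((\<lambda>b. L2_set y b) ` {b. b \<subseteq> A y \<and> b \<in> T0_family c})"
          by (rule finite_imageI[OF fin_bs[OF that]])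
        have "{} \<in> {b. b \<subseteq> A y \<and> b \<in> T0_family c}" using T0_empty[of c] by simp
        hence "{b. b \<subseteq> A y \<and> b \<in> T0_family c} \<noteq> {}" by (rule ex_in_conv[THEN iffD1, OF exI])
        thus "(\<lambda>b. L2_set y b) ` {b. b \<subseteq> A y \<and> b \<in> T0_family c} \<noteq> {}" by (metis image_is_empty)
      qed
      then obtain b where "b \<in> {b. b \<subseteq> A y \<and> b \<in> T0_family c}" "ma y = L2_set y b" by (rule imageE)
      thus ?thesis by auto
    qed
    have \<alpha>A: "\<alpha> y \<in> A y" if "y \<in> U3" for y using that unfolding A_def F_def U3_def by auto
    have ma_r: "r \<le> ma y" if "y \<in> U3" for y
    proof -
      have "L2_set y {\<alpha> y} \<le> ma y" by (rule ma_ge[OF that]) (use \<alpha>A[OF that] T0_single in auto)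
      hence "\<bar>y (\<alpha> y)\<bar> \<le> ma y" by (simp add: L2_single)
      moreover have "y \<in> Y'" using that U3sub by auto
      ultimately show ?thesis using \<alpha>r[of y] by linarith
    qed
    define key where "key y = (\<lfloor>s y / e\<rfloor>, \<lfloor>ma y / e\<rfloor>,
      map (\<lambda>a. \<lfloor>y a / (e / (card R + 1))\<rfloor>) (sorted_list_of_set R))" for y :: "'a \<Rightarrow> real"
    obtain K :: "int \<times> int \<times> int list" where U4: "uncountable {y\<in>U3. key y = K}"
      using pigeon_type[OF uU3, of key] by blast
    define U4 where "U4 = {y\<in>U3. key y = K}"
    define s0 where "s0 = e * fst K"
    define a0 where "a0 = e * fst (snd K)"
    have sI: "s0 \<le> s y \<and> s y < s0 + e" if "y \<in> U4" for y
      using floor_interval[OF epos, of "s y"] that unfolding U4_def s0_def key_def by auto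
    have aI: "a0 \<le> ma y \<and> ma y < a0 + e" if "y \<in> U4" for y
      using floor_interval[OF epos, of "ma y"] that unfolding U4_def a0_def key_def by auto
    have U4sub: "U4 \<subseteq> U3" unfolding U4_def by auto
    have pf: "finite R \<and> finite (A y1) \<and> finite (A y2) \<and> R \<inter> A y1 = {} \<and> R \<inter> A y2 = {} \<and>
        A y1 \<inter> A y2 = {} \<and> TP y1 (R \<union> A y1) e \<and> TP y2 (R \<union> A y2) e \<and>
        L2_set (\<lambda>a. y1 a - y2 a) R \<le> e"
      if y: "y1 \<in> U4" "y2 \<in> U4" "y1 \<noteq> y2" for y1 y2
    proof -
      have y3: "y1 \<in> U3" "y2 \<in> U3" using y U4sub by auto
      have "F y1 \<inter> F y2 = R" using dR y3 U3sub y(3) by blast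
      hence dj: "A y1 \<inter> A y2 = {}" unfolding A_def by blast
      have "R \<union> A y1 = F y1" "R \<union> A y2 = F y2" using RF y3 U3sub unfolding A_def by auto
      hence tp: "TP y1 (R \<union> A y1) e" "TP y2 (R \<union> A y2) e" using TPF y3 U3sub by auto
      have "key y1 = key y2" using y unfolding U4_def by simp
      hence "\<forall>a\<in>R. \<lfloor>y1 a / (e / (card R + 1))\<rfloor> = \<lfloor>y2 a / (e / (card R + 1))\<rfloor>"
        unfolding key_def using finR by simp
      hence "L2_set (\<lambda>a. y1 a - y2 a) R \<le> e" by (rule root_close[OF finR epos])
      thus ?thesis using dj tp finR finA y3 unfolding A_def by auto
    qed
    obtain g :: "'a \<Rightarrow> ('a \<Rightarrow> real)" where g: "inj g" "range g \<subseteq> U4"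
      using omega_inj[OF om U4[folded U4_def]] by blast
    have gU4: "g \<xi> \<in> U4" for \<xi> using g by auto
    have "(\<exists>\<xi> \<eta>. \<xi> < \<eta> \<and> (fst \<circ> c) ` otimes (A (g \<xi>)) (A (g \<eta>)) = {0}) \<and>
      (\<exists>\<xi> \<eta>. \<xi> < \<eta> \<and> (fst \<circ> c) ` otimes (A (g \<xi>)) (A (g \<eta>)) = {1})"
    proof (rule strong)
      show "\<forall>\<xi>. finite (A (g \<xi>)) \<and> A (g \<xi>) \<noteq> {}" using finA \<alpha>A gU4 U4sub by blast
      show "\<forall>\<xi> \<eta>. \<xi> \<noteq> \<eta> \<longrightarrow> A (g \<xi>) \<inter> A (g \<eta>) = {}"
      proof (intro allI impI)
        fix \<xi> \<eta> :: 'a assume "\<xi> \<noteq> \<eta>"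
        hence "g \<xi> \<noteq> g \<eta>" using g(1) by (meson injD)
        thus "A (g \<xi>) \<inter> A (g \<eta>) = {}" using pf[OF gU4 gU4] by blast
      qed
    qed
    then obtain \<xi>0 \<eta>0 \<xi>1 \<eta>1 where c0: "\<xi>0 < \<eta>0" "(fst \<circ> c) ` otimes (A (g \<xi>0)) (A (g \<eta>0)) = {0}"
      and c1: "\<xi>1 < \<eta>1" "(fst \<circ> c) ` otimes (A (g \<xi>1)) (A (g \<eta>1)) = {1}" by blast
    have sq2: "1.4 \<le> sqrt (2::real)" "sqrt (2::real) \<le> 1.5" by (rule sqrt2_bounds)+
    have U4Y: "U4 \<subseteq> Y" by (rule subset_trans[OF subset_trans[OF U4sub U3sub(1)] Y'Y])
    have low: "sqrt 2 * s0 + sqrt 2 * a0 - 6 * e \<le> \<delta>"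
    proof -
      define y1 where "y1 = g \<xi>0"
      define y2 where "y2 = g \<eta>0"
      have y: "y1 \<in> U4" "y2 \<in> U4" "y1 \<noteq> y2" unfolding y1_def y2_def using gU4 g(1) c0(1)
        by (auto dest: injD)
      have y3: "y1 \<in> U3" "y2 \<in> U3" using y U4sub by (meson subsetD)+
      note p = pf[OF y]
      have h: "finite R" "finite (A y1)" "finite (A y2)" "R \<inter> A y1 = {}" "R \<inter> A y2 = {}"
        "A y1 \<inter> A y2 = {}" "TP y1 (R \<union> A y1) e" "TP y2 (R \<union> A y2) e"
        "L2_set (\<lambda>a. y1 a - y2 a) R \<le> e" using p by blast+
      note pe = pair_est[where R=R and AX="A y1" and AY="A y2" and yx=y1 and yy=y2 and e=e]
      have pe3: "sqrt ((L2_set y1 (A y1))\<^sup>2 + (L2_set y2 (A y2))\<^sup>2) - 3 * e \<le> norm2 (\<lambda>a. y1 a - y2 a)"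
        by (rule pe(3)[OF h])
      obtain b1 where b1: "b1 \<subseteq> A y1" "b1 \<in> T0_family c" "L2_set y1 b1 = ma y1"
        using ma_att[OF y3(1)] by blast
      obtain b2 where b2: "b2 \<subseteq> A y2" "b2 \<in> T0_family c" "L2_set y2 b2 = ma y2"
        using ma_att[OF y3(2)] by blast
      have col: "(fst \<circ> c) ` otimes (A y1) (A y2) = {0}" using c0(2) by (simp add: y1_def y2_def)
      have bU: "b1 \<union> b2 \<in> T0_family c" by (rule T0_union[OF b1(2) b2(2) col b1(1) b2(1)])
      have pe4: "sqrt ((L2_set y1 b1)\<^sup>2 + (L2_set y2 b2)\<^sup>2) - 3 * e \<le> normA (T0_family c) (\<lambda>a. y1 a - y2 a)"
        by (rule pe(4)[OF h b1(1) b2(1) bU])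
      have s1: "s0 \<le> L2_set y1 (A y1)" using sI[OF y(1)] unfolding s_def by linarith
      have s2: "s0 \<le> L2_set y2 (A y2)" using sI[OF y(2)] unfolding s_def by linarith
      have a1: "a0 \<le> L2_set y1 b1" using aI[OF y(1)] b1(3) by linarith
      have a2: "a0 \<le> L2_set y2 b2" using aI[OF y(2)] b2(3) by linarith
      have q1: "sqrt 2 * s0 \<le> sqrt ((L2_set y1 (A y1))\<^sup>2 + (L2_set y2 (A y2))\<^sup>2)"
        by (rule sqrt2_lower[OF L2_set_nonneg L2_set_nonneg s1 s2])
      have q2: "sqrt 2 * a0 \<le> sqrt ((L2_set y1 b1)\<^sup>2 + (L2_set y2 b2)\<^sup>2)"
        by (rule sqrt2_lower[OF L2_set_nonneg L2_set_nonneg a1 a2])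
      have yY: "y1 \<in> Y" "y2 \<in> Y" using y U4Y by (meson subsetD)+
      have eq: "norm2 (\<lambda>a. y1 a - y2 a) + normA (T0_family c) (\<lambda>a. y1 a - y2 a) = \<delta>"
        by (rule eqd'[OF yY y(3)])
      show ?thesis using q1 q2 pe3 pe4 eq by linarith
    qed
    have high: "\<delta> \<le> sqrt 2 * s0 + sqrt 2 * e + a0 + 7 * e"
    proof -
      define y1 where "y1 = g \<xi>1"
      define y2 where "y2 = g \<eta>1"
      have y: "y1 \<in> U4" "y2 \<in> U4" "y1 \<noteq> y2" unfolding y1_def y2_def using gU4 g(1) c1(1)
        by (auto dest: injD)
      have y3: "y1 \<in> U3" "y2 \<in> U3" using y U4sub by (meson subsetD)+
      note p = pf[OF y]
      have h: "finite R" "finite (A y1)" "finite (A y2)" "R \<inter> A y1 = {}" "R \<inter> A y2 = {}"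
        "A y1 \<inter> A y2 = {}" "TP y1 (R \<union> A y1) e" "TP y2 (R \<union> A y2) e"
        "L2_set (\<lambda>a. y1 a - y2 a) R \<le> e" using p by blast+
      note pe = pair_est[where R=R and AX="A y1" and AY="A y2" and yx=y1 and yy=y2 and e=e]
      have pe2: "norm2 (\<lambda>a. y1 a - y2 a) \<le> sqrt ((L2_set y1 (A y1))\<^sup>2 + (L2_set y2 (A y2))\<^sup>2) + 3 * e"
        by (rule pe(2)[OF h])
      have col: "(fst \<circ> c) ` otimes (A y1) (A y2) = {1}" using c1(2) by (simp add: y1_def y2_def)
      have cr: "\<forall>b\<in>T0_family c. b \<inter> A y1 = {} \<or> b \<inter> A y2 = {}"
      proof
        fix b assume "b \<in> T0_family c"
        thus "b \<inter> A y1 = {} \<or> b \<inter> A y2 = {}" by (rule T0_cross1[OF _ col h(6)])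
      qed
      have m1: "\<forall>b\<in>T0_family c. b \<subseteq> A y1 \<longrightarrow> L2_set y1 b \<le> ma y1"
      proof (intro ballI impI)
        fix b assume "b \<in> T0_family c" "b \<subseteq> A y1"
        thus "L2_set y1 b \<le> ma y1" by (intro ma_ge[OF y3(1)])
      qed
      have m2: "\<forall>b\<in>T0_family c. b \<subseteq> A y2 \<longrightarrow> L2_set y2 b \<le> ma y2"
      proof (intro ballI impI)
        fix b assume "b \<in> T0_family c" "b \<subseteq> A y2"
        thus "L2_set y2 b \<le> ma y2" by (intro ma_ge[OF y3(2)])
      qed
      have pe5: "normA (T0_family c) (\<lambda>a. y1 a - y2 a) \<le> max (ma y1) (ma y2) + 3 * e"
        by (rule pe(5)[OF h cr m1 m2])
      have s1: "L2_set y1 (A y1) \<le> s0 + e" using sI[OF y(1)] unfolding s_def by linarith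
      have s2: "L2_set y2 (A y2) \<le> s0 + e" using sI[OF y(2)] unfolding s_def by linarith
      have q1: "sqrt ((L2_set y1 (A y1))\<^sup>2 + (L2_set y2 (A y2))\<^sup>2) \<le> sqrt 2 * (s0 + e)"
        by (rule sqrt2_upper[OF L2_set_nonneg L2_set_nonneg s1 s2])
      have q2: "max (ma y1) (ma y2) \<le> a0 + e" using aI[OF y(1)] aI[OF y(2)] by linarith
      have q3: "sqrt 2 * (s0 + e) = sqrt 2 * s0 + sqrt 2 * e" by (simp add: distrib_left)
      have yY: "y1 \<in> Y" "y2 \<in> Y" using y U4Y by (meson subsetD)+
      have eq: "norm2 (\<lambda>a. y1 a - y2 a) + normA (T0_family c) (\<lambda>a. y1 a - y2 a) = \<delta>"
        by (rule eqd'[OF yY y(3)])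
      show ?thesis using q1 q2 q3 pe2 pe5 eq by linarith
    qed
    obtain y0 where y0: "y0 \<in> U4" using gU4 by blast
    have "r \<le> ma y0" using ma_r y0 U4sub by auto
    hence a0r: "r - e \<le> a0" using aI[OF y0] by linarith
    have a0pos: "0 \<le> a0" using a0r unfolding e_def using rpos by simp
    have "sqrt 2 * a0 - a0 \<le> sqrt 2 * e + 13 * e" using low high by linarith
    moreover have "1.4 * a0 \<le> sqrt 2 * a0" using sq2 a0pos by (intro mult_right_mono) auto
    moreover have "sqrt 2 * e \<le> 1.5 * e" using sq2 epos by (intro mult_right_mono) auto
    ultimately have "0.4 * a0 \<le> 14.5 * e" by linarith
    thus False using a0r unfolding e_def using rpos by simp
  qed
qed


end
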